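(* For every instance of 2NC-TAP, every extreme point $x$ of the feasible region of the partition LP $(P)$ satisfies $0\le x_\ell\le 1$ for every link $\ell\in L(G)$; that is, all extreme points of $(P)$ lie in $[0,1]^{L(G)}$.
   Context: An instance of 2NC-TAP consists of a simple undirected graph $G=(V,E)$ with $|V|\ge 3$, a spanning tree $T\subseteq E$ of $G$ (whose edges have cost $0$), and nonnegative costs $\mathrm{cost}(\ell)$ on the links, i.e. the edges of $L(G):=E\setminus T$. Let $N(T)$ denote the set of non-leaf nodes of $T$. For $u\in N(T)$, let $\pi_u$ be the partition of $V\setminus\{u\}$ into the vertex sets of the connected components of $T-u$, and let $\Pi_u$ be the set of all partitions $\mathcal P$ of $V\setminus\{u\}$ such that every set of $\pi_u$ is contained in some set of $\mathcal P$. A link $\ell$ crosses $\mathcal P\in\Pi_u$ if neither end node of $\ell$ is $u$ and the two end nodes of $\ell$ lie in different sets of $\mathcal P$. The partition LP $(P)$ has a variable $x_\ell$ for each link and reads: minimize $\sum_{\ell\in L(G)}\mathrm{cost}(\ell)x_\ell$ subject to $\sum_{\ell \text{ crosses } \mathcal P} x_\ell\ge |\mathcal P|-1$ for all $u\in N(T)$ and all $\mathcal P\in\Pi_u$, and $x_\ell\ge 0$ for all $\ell\in L(G)$. *)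

theory Defs
  imports Complex_Main "HOL-Library.Disjoint_Sets"
begin

definition simple_graph :: "'a set \<Rightarrow> 'a set set \<Rightarrow> bool" where
  "simple_graph V E \<longleftrightarrow> finite V \<and> E \<subseteq> {{a, b} | a b. a \<in> V \<and> b \<in> V \<and> a \<noteq> b}"

definition reach :: "'a set \<Rightarrow> 'a set set \<Rightarrow> ('a \<times> 'a) set" where
  "reach W F = Id_on W \<union> ({(a, b). a \<in> W \<and> b \<in> W \<and> {a, b} \<in> F})\<^sup>+"

definition components :: "'a set \<Rightarrow> 'a set set \<Rightarrow> 'a set set" where
  "components W F = W // reach W F"

definition connected_graph :: "'a set \<Rightarrow> 'a set set \<Rightarrow> bool" where
  "connected_graph W F \<longleftrightarrow> (\<forall>a\<in>W. \<forall>b\<in>W. (a, b) \<in> reach W F)"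

text \<open>Acyclic: no edge lies on a cycle, i.e. the ends of every edge are disconnected
  after deleting that edge.\<close>
definition acyclic_graph :: "'a set \<Rightarrow> 'a set set \<Rightarrow> bool" where
  "acyclic_graph W F \<longleftrightarrow> (\<forall>a b. {a, b} \<in> F \<longrightarrow> (a, b) \<notin> reach W (F - {{a, b}}))"

definition spanning_tree :: "'a set \<Rightarrow> 'a set set \<Rightarrow> 'a set set \<Rightarrow> bool" where
  "spanning_tree V E T \<longleftrightarrow> T \<subseteq> E \<and> connected_graph V T \<and> acyclic_graph V T"

definition degree :: "'a set set \<Rightarrow> 'a \<Rightarrow> nat" where
  "degree F u = card {e \<in> F. u \<in> e}"

definition nonleaf :: "'a set \<Rightarrow> 'a set set \<Rightarrow> 'a set" where
  "nonleaf V T = {u \<in> V. degree T u \<ge> 2}"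

text \<open>pi_u: the partition of V - {u} into vertex sets of components of T - u.\<close>
definition pi_part :: "'a set \<Rightarrow> 'a set set \<Rightarrow> 'a \<Rightarrow> 'a set set" where
  "pi_part V T u = components (V - {u}) T"

definition Pi_parts :: "'a set \<Rightarrow> 'a set set \<Rightarrow> 'a \<Rightarrow> 'a set set set" where
  "Pi_parts V T u = {P. partition_on (V - {u}) P \<and> (\<forall>C\<in>pi_part V T u. \<exists>B\<in>P. C \<subseteq> B)}"

definition links :: "'a set set \<Rightarrow> 'a set set \<Rightarrow> 'a set set" where
  "links E T = E - T"

definition crosses :: "'a \<Rightarrow> 'a set \<Rightarrow> 'a set set \<Rightarrow> bool" where
  "crosses u l P \<longleftrightarrow> u \<notin> l \<and> (\<exists>a b. l = {a, b} \<and> (\<exists>A\<in>P. \<exists>B\<in>P. a \<in> A \<and> b \<in> B \<and> A \<noteq> B))"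

text \<open>Feasible region of the partition LP (P), as vectors in R^{L(G)}; a vector is
  represented by a function on edges that vanishes outside the link set.\<close>
definition partition_LP_region :: "'a set \<Rightarrow> 'a set set \<Rightarrow> 'a set set \<Rightarrow> ('a set \<Rightarrow> real) set" where
  "partition_LP_region V E T = {x.
     (\<forall>e. e \<notin> links E T \<longrightarrow> x e = 0) \<and>
     (\<forall>l\<in>links E T. x l \<ge> 0) \<and>
     (\<forall>u\<in>nonleaf V T. \<forall>P\<in>Pi_parts V T u.
        (\<Sum>l\<in>{l \<in> links E T. crosses u l P}. x l) \<ge> real (card P) - 1)}"

definition extreme_point :: "('b \<Rightarrow> real) \<Rightarrow> ('b \<Rightarrow> real) set \<Rightarrow> bool" where
  "extreme_point x S \<longleftrightarrow> x \<in> S \<and>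
     \<not> (\<exists>y\<in>S. \<exists>z\<in>S. \<exists>t::real. y \<noteq> z \<and> 0 < t \<and> t < 1 \<and> (\<forall>i. x i = t * y i + (1 - t) * z i))"

end

theory Submission
  imports Defs
begin

lemma merge_partition:
  assumes P: "partition_on W P" and A: "A \<in> P" and B: "B \<in> P" and AB: "A \<noteq> B"
  shows "partition_on W (insert (A \<union> B) (P - {A, B}))"
proof -
  have d: "disjoint P" using partition_onD2[OF P] .
  have u: "\<Union>P = W" using partition_onD1[OF P] by simp
  have e: "{} \<notin> P" using partition_onD3[OF P] .
  show ?thesis unfolding partition_on_def
  proof (intro conjI)
    show "\<Union> (insert (A \<union> B) (P - {A, B})) = W" using u A B by blast
    show "{} \<notin> insert (A \<union> B) (P - {A, B})" using e A by auto
    show "disjoint (insert (A \<union> B) (P - {A, B}))"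
    proof (rule disjointI)
      fix X Y assume X: "X \<in> insert (A \<union> B) (P - {A, B})" and Y: "Y \<in> insert (A \<union> B) (P - {A, B})" and XY: "X \<noteq> Y"
      have dd: "\<And>X Y. X \<in> P \<Longrightarrow> Y \<in> P \<Longrightarrow> X \<noteq> Y \<Longrightarrow> X \<inter> Y = {}"
        using d by (simp add: disjointD)
      show "X \<inter> Y = {}"
      proof (cases "X = A \<union> B")
        case True
        hence "Y \<in> P" "Y \<noteq> A" "Y \<noteq> B" using Y XY by auto
        thus ?thesis using True dd A B by blast
      next
        case False
        hence X': "X \<in> P" "X \<noteq> A" "X \<noteq> B" using X by auto
        show ?thesis
        proof (cases "Y = A \<union> B")
          case True thus ?thesis using X' dd A B by blast
        next
          case False thus ?thesis using X' Y XY dd by auto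
        qed
      qed
    qed
  qed
qed

lemma merge_card:
  assumes P: "partition_on W P" "finite P" and A: "A \<in> P" and B: "B \<in> P" and AB: "A \<noteq> B"
  shows "card (insert (A \<union> B) (P - {A, B})) = card P - 1"
proof -
  have d: "disjoint P" using partition_onD2[OF P(1)] .
  have e: "{} \<notin> P" using partition_onD3[OF P(1)] .
  have "A \<union> B \<notin> P - {A, B}"
  proof
    assume "A \<union> B \<in> P - {A, B}"
    then obtain C where C: "C \<in> P" "C \<noteq> A" "C = A \<union> B" by auto
    have "A \<noteq> {}" using e A by auto
    moreover have "C \<inter> A = {}" using disjointD[OF d C(1) A C(2)] .
    ultimately show False using C by auto
  qed
  moreover have "card (P - {A,B}) = card P - 2" using A B AB P(2) by auto
  moreover have "card P \<ge> 2"
  proof -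
    have "{A,B} \<subseteq> P" using A B by auto
    then have "card {A,B} \<le> card P" using P(2) card_mono by blast
    thus ?thesis using AB by auto
  qed
  ultimately show ?thesis using P(2) by auto
qed

lemma cap_feasible:
  assumes sg: "simple_graph V E"
    and xf: "x \<in> partition_LP_region V E T"
    and l: "l \<in> links E T"
  shows "x(l := 1) \<in> partition_LP_region V E T"
proof -
  have finE: "finite E"
  proof -
    have "finite V" using sg unfolding simple_graph_def by auto
    hence "finite (Pow V)" by auto
    moreover have "E \<subseteq> Pow V" using sg unfolding simple_graph_def by auto
    ultimately show ?thesis using finite_subset by blast
  qed
  have finL: "finite (links E T)" using finE unfolding links_def by auto
  have x0: "\<forall>e. e \<notin> links E T \<longrightarrow> x e = 0" and xn: "\<forall>l\<in>links E T. x l \<ge> 0"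
    and xc: "\<forall>u\<in>nonleaf V T. \<forall>P\<in>Pi_parts V T u.
        (\<Sum>l\<in>{l \<in> links E T. crosses u l P}. x l) \<ge> real (card P) - 1"
    using xf unfolding partition_LP_region_def by auto
  show ?thesis unfolding partition_LP_region_def
  proof (intro CollectI conjI ballI allI impI)
    fix e assume "e \<notin> links E T" thus "(x(l := 1)) e = 0" using x0 l by auto
  next
    fix e assume "e \<in> links E T" thus "(x(l := 1)) e \<ge> 0" using xn by auto
  next
    fix u P assume u: "u \<in> nonleaf V T" and P: "P \<in> Pi_parts V T u"
    define S where "S = {l \<in> links E T. crosses u l P}"
    have finS: "finite S" using finL unfolding S_def by auto
    show "(\<Sum>k\<in>{l \<in> links E T. crosses u l P}. (x(l := 1)) k) \<ge> real (card P) - 1"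
    proof (cases "l \<in> S")
      case False
      have "(\<Sum>k\<in>S. (x(l := 1)) k) = (\<Sum>k\<in>S. x k)"
        by (rule sum.cong) (use False in auto)
      thus ?thesis using xc u P unfolding S_def by auto
    next
      case True
      have Pp: "partition_on (V - {u}) P" and Pc: "\<forall>C\<in>pi_part V T u. \<exists>B\<in>P. C \<subseteq> B"
        using P unfolding Pi_parts_def by auto
      have finV: "finite V" using sg unfolding simple_graph_def by auto
      have finP: "finite P"
      proof -
        have "P \<subseteq> Pow (V - {u})" using partition_onD1[OF Pp] by auto
        thus ?thesis using finV finite_subset by (metis finite_Diff finite_Pow_iff)
      qed
      from True obtain a b A B where lab: "l = {a,b}" and AB: "A \<in> P" "B \<in> P" "a \<in> A" "b \<in> B" "A \<noteq> B"
        and ul: "u \<notin> l"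
        unfolding S_def crosses_def by blast
      define P' where "P' = insert (A \<union> B) (P - {A, B})"
      have P'p: "partition_on (V - {u}) P'" unfolding P'_def using merge_partition[OF Pp AB(1,2,5)] .
      have P'c: "card P' = card P - 1" unfolding P'_def using merge_card[OF Pp finP AB(1,2,5)] .
      have cP2: "card P \<ge> 2"
      proof -
        have "{A,B} \<subseteq> P" using AB by auto
        then have "card {A,B} \<le> card P" using finP card_mono by blast
        thus ?thesis using AB by auto
      qed
      have refine: "\<forall>C\<in>P. \<exists>D\<in>P'. C \<subseteq> D"
      proof
        fix C assume C: "C \<in> P"
        show "\<exists>D\<in>P'. C \<subseteq> D"
        proof (cases "C = A \<or> C = B")
          case True
          hence "C \<subseteq> A \<union> B" by auto
          moreover have "A \<union> B \<in> P'" unfolding P'_def by simp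
          ultimately show ?thesis by blast
        next
          case False
          hence "C \<in> P'" unfolding P'_def using C by simp
          thus ?thesis by blast
        qed
      qed
      have P'Pi: "P' \<in> Pi_parts V T u" unfolding Pi_parts_def
      proof (intro CollectI conjI P'p ballI)
        fix C assume "C \<in> pi_part V T u"
        then obtain B0 where B0: "B0 \<in> P" "C \<subseteq> B0" using Pc by blast
        then obtain D where "D \<in> P'" "B0 \<subseteq> D" using refine by blast
        thus "\<exists>B\<in>P'. C \<subseteq> B" using B0 by blast
      qed
      define S' where "S' = {l \<in> links E T. crosses u l P'}"
      have dP': "disjoint P'" using partition_onD2[OF P'p] .
      have uP: "\<Union>P = V - {u}" using partition_onD1[OF Pp] by auto
      have sub: "S' \<subseteq> S - {l}"
      proof
        fix k assume k: "k \<in> S'"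
        then obtain c d C D where kc: "k = {c,d}" "C \<in> P'" "D \<in> P'" "c \<in> C" "d \<in> D" "C \<noteq> D" "u \<notin> k"
          "k \<in> links E T"
          unfolding S'_def crosses_def by blast
        have cV: "c \<in> \<Union>P" "d \<in> \<Union>P" using kc partition_onD1[OF P'p] uP by auto
        obtain C0 where C0: "C0 \<in> P" "c \<in> C0" using cV(1) by (rule UnionE)
        obtain D0 where D0: "D0 \<in> P" "d \<in> D0" using cV(2) by (rule UnionE)
        have dd: "\<And>X Y z. X \<in> P' \<Longrightarrow> Y \<in> P' \<Longrightarrow> z \<in> X \<Longrightarrow> z \<in> Y \<Longrightarrow> X = Y"
          using dP' by (meson disjointD disjoint_iff)
        have "C0 \<noteq> D0"
        proof
          assume eq: "C0 = D0"
          obtain G where G: "G \<in> P'" "C0 \<subseteq> G" using refine C0(1) by blast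
          have "C = G" using dd[OF kc(2) G(1) kc(4)] G C0 by blast
          moreover have "D = G" using dd[OF kc(3) G(1) kc(5)] G D0 eq by blast
          ultimately show False using kc by auto
        qed
        hence "crosses u k P" unfolding crosses_def using kc C0 D0 by blast
        moreover have "k \<noteq> l"
        proof
          assume "k = l"
          have AB': "A \<union> B \<in> P'" unfolding P'_def by auto
          have cd: "c \<in> A \<union> B" "d \<in> A \<union> B" using \<open>k = l\<close> kc(1) lab AB(3,4)
            by (metis UnI1 UnI2 doubleton_eq_iff)+
          have "C = A \<union> B" using dd[OF kc(2) AB' kc(4) cd(1)] .
          moreover have "D = A \<union> B" using dd[OF kc(3) AB' kc(5) cd(2)] .
          ultimately show False using kc by auto
        qed
        ultimately show "k \<in> S - {l}" using kc unfolding S_def by auto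
      qed
      have "real (card P') - 1 \<le> (\<Sum>k\<in>S'. x k)" using xc u P'Pi unfolding S'_def by auto
      also have "\<dots> \<le> (\<Sum>k\<in>S - {l}. x k)"
        by (rule sum_mono2) (use finS sub xn in \<open>auto simp: S_def\<close>)
      finally have h: "real (card P) - 2 \<le> (\<Sum>k\<in>S - {l}. x k)" using P'c cP2 by auto
      have "(\<Sum>k\<in>S. (x(l := 1)) k) = (x(l := 1)) l + (\<Sum>k\<in>S - {l}. (x(l := 1)) k)"
        by (rule sum.remove[OF finS True])
      also have "(x(l := 1)) l = 1" by simp
      also have "(\<Sum>k\<in>S - {l}. (x(l := 1)) k) = (\<Sum>k\<in>S - {l}. x k)"
        by (rule sum.cong) auto
      finally show ?thesis using h unfolding S_def by auto
    qed
  qed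
qed

lemma up_feasible:
  assumes xf: "x \<in> partition_LP_region V E T"
    and l: "l \<in> links E T" and c: "c \<ge> x l"
  shows "x(l := c) \<in> partition_LP_region V E T"
proof -
  have x0: "\<forall>e. e \<notin> links E T \<longrightarrow> x e = 0" and xn: "\<forall>l\<in>links E T. x l \<ge> 0"
    and xc: "\<forall>u\<in>nonleaf V T. \<forall>P\<in>Pi_parts V T u.
        (\<Sum>l\<in>{l \<in> links E T. crosses u l P}. x l) \<ge> real (card P) - 1"
    using xf unfolding partition_LP_region_def by auto
  show ?thesis unfolding partition_LP_region_def
  proof (intro CollectI conjI ballI allI impI)
    fix e assume "e \<notin> links E T" thus "(x(l := c)) e = 0" using x0 l by auto
  next
    fix e assume "e \<in> links E T" thus "(x(l := c)) e \<ge> 0" using xn l c by force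
  next
    fix u P assume u: "u \<in> nonleaf V T" and P: "P \<in> Pi_parts V T u"
    have "real (card P) - 1 \<le> (\<Sum>k\<in>{l \<in> links E T. crosses u l P}. x k)" using xc u P by auto
    also have "\<dots> \<le> (\<Sum>k\<in>{l \<in> links E T. crosses u l P}. (x(l := c)) k)"
      by (rule sum_mono) (use c in auto)
    finally show "(\<Sum>k\<in>{l \<in> links E T. crosses u l P}. (x(l := c)) k) \<ge> real (card P) - 1" .
  qed
qed

theorem mainTheorem1:
  fixes V :: "'a set" and E T :: "'a set set" and cost :: "'a set \<Rightarrow> real" and x :: "'a set \<Rightarrow> real"
  assumes "simple_graph V E"
    and "card V \<ge> 3"
    and "spanning_tree V E T"
    and "\<forall>l\<in>links E T. cost l \<ge> 0"
    and "extreme_point x (partition_LP_region V E T)"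
  shows "\<forall>l\<in>links E T. 0 \<le> x l \<and> x l \<le> 1"
proof
  fix l assume l: "l \<in> links E T"
  have xf: "x \<in> partition_LP_region V E T" using assms(5) unfolding extreme_point_def by auto
  have ne: "\<not> (\<exists>y\<in>partition_LP_region V E T. \<exists>z\<in>partition_LP_region V E T. \<exists>t::real.
      y \<noteq> z \<and> 0 < t \<and> t < 1 \<and> (\<forall>i. x i = t * y i + (1 - t) * z i))"
    using assms(5) unfolding extreme_point_def by auto
  have "0 \<le> x l" using xf l unfolding partition_LP_region_def by auto
  moreover have "x l \<le> 1"
  proof (rule ccontr)
    assume "\<not> x l \<le> 1"
    hence gt: "x l > 1" by auto
    define y where "y = x(l := 1)"
    define z where "z = x(l := 2 * x l - 1)"
    have yf: "y \<in> partition_LP_region V E T" unfolding y_def using cap_feasible[OF assms(1) xf l] .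
    have zf: "z \<in> partition_LP_region V E T" unfolding z_def using up_feasible[OF xf l] gt by auto
    have "y \<noteq> z"
    proof
      assume "y = z" hence "y l = z l" by simp
      thus False using gt unfolding y_def z_def by auto
    qed
    moreover have "\<forall>i. x i = (1/2) * y i + (1 - 1/2) * z i" unfolding y_def z_def by (auto simp: field_simps)
    ultimately have "\<exists>t::real. y \<noteq> z \<and> 0 < t \<and> t < 1 \<and> (\<forall>i. x i = t * y i + (1 - t) * z i)"
      by (intro exI[of _ "1/2"]) auto
    then show False using ne yf zf by blast
  qed
  ultimately show "0 \<le> x l \<and> x l \<le> 1" by auto
qed

end
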